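(* (i) For $k\ge 4$ (and any $N\ge 2$), $$Q_2^{(k)}(x)=\frac{(3k-1)(1+x^2)-2(3k-5)x}{3k-1}.$$ (ii) For $k\ge 5$ (and any $N\ge 2$), $$Q_3^{(k)}(x) = -\frac{(x-1)\bigl(kx^2-2(k-4)x+k\bigr)}{k}.$$
   Context: Let $k\ge 2$, $N\ge 2$, $H[c,c'] = \#\{(d_1,\ldots,d_k)\in\{0,\ldots,N-1\}^k : \lfloor (d_1+\cdots+d_k+c)/N\rfloor = c'\}$ for $c,c'\in\{0,\ldots,k-1\}$ and $T=N^{-k}H$ (Holte matrix). For $j\in\{0,\ldots,k-1\}$ let $v_j$ be the right eigenvector of $T$ ($Tv_j=N^{-j}v_j$) normalized by $v_j[0]=1$. The quotient polynomial $Q_j^{(k)}$ is defined by $\sum_{i=0}^{k-1}\binom{k-1}{i}v_j[i]x^i=(1+x)^{k-1-j}Q_j^{(k)}(x)$ (this polynomial division is exact, $\deg Q_j^{(k)}=j$; $v_j$ and $Q^{(k)}_j$ do not depend on $N$). *)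

theory Defs
  imports "HOL-Computational_Algebra.Polynomial" "HOL-Library.FuncSet"
begin

definition holte_H :: "nat \<Rightarrow> nat \<Rightarrow> nat \<Rightarrow> nat \<Rightarrow> nat" where
  "holte_H k N c c' =
     card {d \<in> PiE {..<k} (\<lambda>_. {..<N}). ((\<Sum>i<k. d i) + c) div N = c'}"

definition holte_T :: "nat \<Rightarrow> nat \<Rightarrow> nat \<Rightarrow> nat \<Rightarrow> real" where
  "holte_T k N c c' = real (holte_H k N c c') / real N ^ k"

text \<open>v is a right eigenvector of T for eigenvalue N^(-j), normalized by v[0] = 1
  (vectors of length k are functions nat => real vanishing outside {0..k-1}).\<close>
definition is_holte_eigvec :: "nat \<Rightarrow> nat \<Rightarrow> nat \<Rightarrow> (nat \<Rightarrow> real) \<Rightarrow> bool" where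
  "is_holte_eigvec k N j v \<longleftrightarrow>
     (\<forall>c<k. (\<Sum>c'<k. holte_T k N c c' * v c') = v c / real N ^ j)
     \<and> v 0 = 1 \<and> (\<forall>i\<ge>k. v i = 0)"

definition holte_v :: "nat \<Rightarrow> nat \<Rightarrow> nat \<Rightarrow> nat \<Rightarrow> real" where
  "holte_v k N j = (THE v. is_holte_eigvec k N j v)"

text \<open>Quotient polynomial: sum_i binom(k-1,i) v_j[i] x^i = (1+x)^(k-1-j) Q_j(x).\<close>
definition holte_Q :: "nat \<Rightarrow> nat \<Rightarrow> nat \<Rightarrow> real poly" where
  "holte_Q k N j =
     (\<Sum>i<k. monom (real (k - 1 choose i) * holte_v k N j i) i) div [:1, 1:] ^ (k - 1 - j)"

end

theory Submission
  imports Defs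
begin


definition digs :: "nat \<Rightarrow> nat \<Rightarrow> (nat \<Rightarrow> nat) set" where
  "digs k N = PiE {..<k} (\<lambda>_. {..<N})"

definition Sd :: "nat \<Rightarrow> nat \<Rightarrow> (nat \<Rightarrow> real) \<Rightarrow> nat \<Rightarrow> real" where
  "Sd k N f c = (\<Sum>d\<in>digs k N. f (c + (\<Sum>i<k. d i)))"

lemma finite_digs[simp]: "finite (digs k N)"
  unfolding digs_def by (auto intro: finite_PiE)

lemma card_digs: "card (digs k N) = N ^ k"
  unfolding digs_def by (simp add: card_PiE)

lemma Sd_0[simp]: "Sd 0 N f c = f c"
  unfolding Sd_def digs_def by simp

lemma Sd_Suc: "Sd (Suc k) N f c = (\<Sum>t<N. Sd k N f (c + t))"
proof -
  have D: "digs (Suc k) N = (\<lambda>(y, g). g(k := y)) ` ({..<N} \<times> digs k N)"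
    unfolding digs_def lessThan_Suc by (simp add: PiE_insert_eq)
  have I: "inj_on (\<lambda>(y, g). g(k := y)) ({..<N} \<times> digs k N)"
    unfolding digs_def using inj_combinator[of k "{..<k}" "\<lambda>_. {..<N}"] by simp
  have "Sd (Suc k) N f c = (\<Sum>(y,g)\<in>{..<N} \<times> digs k N. f (c + (\<Sum>i<Suc k. (g(k := y)) i)))"
    unfolding Sd_def D by (subst sum.reindex[OF I]) (simp add: case_prod_beta)
  also have "\<dots> = (\<Sum>(y,g)\<in>{..<N} \<times> digs k N. f ((c + y) + (\<Sum>i<k. g i)))"
  proof (rule sum.cong[OF refl], clarify)
    fix y :: nat and g :: "nat \<Rightarrow> nat"
    have "(\<Sum>i<k. (g(k := y)) i) = (\<Sum>i<k. g i)" by (rule sum.cong) auto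
    then show "f (c + (\<Sum>i<Suc k. (g(k := y)) i)) = f ((c + y) + (\<Sum>i<k. g i))"
      by (simp add: ac_simps)
  qed
  also have "\<dots> = (\<Sum>t<N. Sd k N f (c + t))"
    unfolding Sd_def by (simp add: sum.cartesian_product)
  finally show ?thesis .
qed

lemma Sd_add: "Sd k N (\<lambda>y. f y + g y) c = Sd k N f c + Sd k N g c"
  unfolding Sd_def by (simp add: sum.distrib)

lemma Sd_cmult: "Sd k N (\<lambda>y. a * f y) c = a * Sd k N f c"
  unfolding Sd_def by (simp add: sum_distrib_left)

lemma Sd_sum: "finite A \<Longrightarrow> Sd k N (\<lambda>y. \<Sum>e\<in>A. f e y) c = (\<Sum>e\<in>A. Sd k N (f e) c)"
  unfolding Sd_def by (rule sum.swap)

lemma Sd_const: "Sd k N (\<lambda>y. a) c = real N ^ k * a"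
  unfolding Sd_def by (simp add: card_digs)

lemma Sd_cong: "(\<And>y. f y = g y) \<Longrightarrow> Sd k N f c = Sd k N g c"
  by (simp add: Sd_def)

lemma sum_mod_shift:
  fixes y N :: nat and h :: "nat \<Rightarrow> real"
  assumes "N > 0"
  shows "(\<Sum>t<N. h ((y + t) mod N)) = (\<Sum>u<N. (h u :: real))"
proof (induction y)
  case 0 then show ?case by (intro sum.cong) auto
next
  case (Suc y)
  obtain M where M: "N = Suc M" using assms by (cases N) auto
  have "(\<Sum>t<N. h ((Suc y + t) mod N)) = (\<Sum>t<N. h ((y + Suc t) mod N))" by simp
  also have "\<dots> = (\<Sum>t<N. h ((y + t) mod N))"
  proof -
    have a: "(\<Sum>t<Suc M. h ((y + t) mod Suc M)) = h (y mod Suc M) + (\<Sum>t<M. h ((y + Suc t) mod Suc M))"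
      by (subst sum.lessThan_Suc_shift) simp
    have b: "(\<Sum>t<Suc M. h ((y + Suc t) mod Suc M)) = (\<Sum>t<M. h ((y + Suc t) mod Suc M)) + h ((y + Suc M) mod Suc M)"
      by simp
    have c: "(y + Suc M) mod Suc M = y mod Suc M" by (metis mod_add_self2)
    show ?thesis unfolding M a b c by simp
  qed
  finally show ?case using Suc by simp
qed

lemma Sd_Suc': "Sd (Suc k) N F c = Sd k N (\<lambda>z. \<Sum>t<N. F (z + t)) c"
proof -
  have "Sd (Suc k) N F c = (\<Sum>t<N. Sd k N F (c+t))" by (rule Sd_Suc)
  also have "\<dots> = Sd k N (\<lambda>z. \<Sum>t<N. F (z + t)) c"
    unfolding Sd_def by (rule trans[OF sum.swap]) (intro sum.cong refl, simp add: ac_simps)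
  finally show ?thesis .
qed

lemma Sd_periodic:
  assumes "N > 0"
  shows "Sd (Suc k) N (\<lambda>y. h (y mod N)) c = real N ^ k * (\<Sum>u<N. h u)"
proof -
  have "Sd (Suc k) N (\<lambda>y. h (y mod N)) c = Sd k N (\<lambda>z. \<Sum>t<N. h ((z + t) mod N)) c"
    by (rule Sd_Suc')
  also have "\<dots> = Sd k N (\<lambda>z. \<Sum>u<N. h u) c"
    using sum_mod_shift[OF assms] by simp
  finally show ?thesis by (simp add: Sd_const)
qed



lemma coeff_pcompose_lin:
  fixes p :: "real poly"
  assumes "degree p \<le> b"
  shows "coeff (pcompose p [:t, 1:]) b = coeff p b"
proof (cases "degree p = b")
  case True
  have "lead_coeff (pcompose p [:t, 1:]) = lead_coeff p"
    by (subst lead_coeff_comp) auto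
  moreover have "degree (pcompose p [:t, 1:]) = degree p" by (simp add: degree_pcompose)
  ultimately show ?thesis using True by simp
next
  case False
  then have "degree p < b" using assms by simp
  moreover have "degree (pcompose p [:t, 1:]) = degree p" by (simp add: degree_pcompose)
  ultimately show ?thesis by (simp add: coeff_eq_0)
qed

lemma poly_shift_sum:
  fixes p :: "real poly"
  assumes "degree p \<le> b"
  shows "\<exists>q. degree q \<le> b \<and> coeff q b = real N * coeff p b \<and>
     (\<forall>x. (\<Sum>t<N. poly p (x + real t)) = poly q x)"
proof (intro exI conjI allI)
  let ?q = "\<Sum>t<N. pcompose p [:real t, 1:]"
  show "degree ?q \<le> b"
    by (rule degree_sum_le) (use assms in \<open>auto simp: degree_pcompose\<close>)
  show "coeff ?q b = real N * coeff p b"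
    by (simp add: coeff_sum coeff_pcompose_lin[OF assms])
  fix x
  show "(\<Sum>t<N. poly p (x + real t)) = poly ?q x"
    by (simp add: poly_sum poly_pcompose add.commute)
qed

lemma Sd_pow_poly:
  "\<exists>p. degree p \<le> b \<and> coeff p b = real N ^ k \<and>
     (\<forall>c. Sd k N (\<lambda>y. real y ^ b) c = poly p (real c))"
proof (induction k)
  case 0
  show ?case
    by (rule exI[of _ "monom 1 b"]) (simp add: degree_monom_le poly_monom)
next
  case (Suc k)
  then obtain p where p: "degree p \<le> b" "coeff p b = real N ^ k"
    "\<And>c. Sd k N (\<lambda>y. real y ^ b) c = poly p (real c)" by blast
  obtain q where q: "degree q \<le> b" "coeff q b = real N * coeff p b"
    "\<And>x. (\<Sum>t<N. poly p (x + real t)) = poly q x"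
    using poly_shift_sum[OF p(1), of N] by blast
  show ?case
  proof (intro exI conjI allI)
    show "degree q \<le> b" by fact
    show "coeff q b = real N ^ Suc k" using q(2) p(2) by simp
    fix c
    show "Sd (Suc k) N (\<lambda>y. real y ^ b) c = poly q (real c)"
      unfolding Sd_Suc p(3) q(3)[symmetric] by simp
  qed
qed



lemma shift_expand:
  fixes z N b :: nat and h :: "nat \<Rightarrow> real"
  shows "(\<Sum>t<N. real (z + t) ^ b * h ((z + t) mod N)) =
    (\<Sum>e\<le>b. real (b choose e) * (real z ^ e * (\<Sum>t<N. real t ^ (b - e) * h ((z mod N + t) mod N))))"
proof -
  have "(\<Sum>t<N. real (z + t) ^ b * h ((z + t) mod N)) =
    (\<Sum>t<N. \<Sum>e\<le>b. real (b choose e) * (real z ^ e * (real t ^ (b - e) * h ((z mod N + t) mod N))))"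
  proof (rule sum.cong[OF refl])
    fix t
    have "real (z + t) ^ b = (\<Sum>e\<le>b. real (b choose e) * real z ^ e * real t ^ (b - e))"
      by (simp add: binomial_ring)
    then show "real (z + t) ^ b * h ((z + t) mod N) =
      (\<Sum>e\<le>b. real (b choose e) * (real z ^ e * (real t ^ (b - e) * h ((z mod N + t) mod N))))"
      by (simp only: mod_add_left_eq) (simp add: sum_distrib_left ac_simps)
  qed
  also have "\<dots> = (\<Sum>e\<le>b. real (b choose e) * (real z ^ e * (\<Sum>t<N. real t ^ (b - e) * h ((z mod N + t) mod N))))"
    by (subst sum.swap) (simp add: sum_distrib_left)
  finally show ?thesis .
qed

lemma Sd_pow_per_poly:
  assumes N: "N > 0"
  shows "b < k \<Longrightarrow> \<exists>p. degree p \<le> b \<and>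
     (\<forall>c. Sd k N (\<lambda>y. real y ^ b * h (y mod N)) c = poly p (real c))"
proof (induction b arbitrary: k h rule: less_induct)
  case (less b)
  then obtain k' where k: "k = Suc k'" and bk: "b \<le> k'" by (cases k) auto
  define he where "he e r = (\<Sum>t<N. real t ^ (b - e) * h ((r + t) mod N))" for e r
  have red: "Sd k N (\<lambda>y. real y ^ b * h (y mod N)) c =
      (\<Sum>e\<le>b. real (b choose e) * Sd k' N (\<lambda>z. real z ^ e * he e (z mod N)) c)" for c
    unfolding k Sd_Suc' shift_expand he_def
    by (simp add: Sd_sum Sd_cmult)
  have "\<forall>e\<in>{..b}. \<exists>p. degree p \<le> b \<and>
      (\<forall>c. Sd k' N (\<lambda>z. real z ^ e * he e (z mod N)) c = poly p (real c))"
  proof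
    fix e assume "e \<in> {..b}"
    then have eb: "e \<le> b" by simp
    show "\<exists>p. degree p \<le> b \<and>
      (\<forall>c. Sd k' N (\<lambda>z. real z ^ e * he e (z mod N)) c = poly p (real c))"
    proof (cases "e = b")
      case True
      have "he e r = (\<Sum>u<N. h u)" for r
        unfolding he_def True using sum_mod_shift[OF N, of h r] by simp
      then have eq: "Sd k' N (\<lambda>z. real z ^ e * he e (z mod N)) c =
          (\<Sum>u<N. h u) * Sd k' N (\<lambda>z. real z ^ b) c" for c
        using True by (simp add: Sd_cmult[symmetric] mult.commute)
      obtain p where p: "degree p \<le> b" "\<And>c. Sd k' N (\<lambda>y. real y ^ b) c = poly p (real c)"
        using Sd_pow_poly[of b N k'] by blast
      show ?thesis
        by (rule exI[of _ "smult (\<Sum>u<N. h u) p"]) (use p in \<open>simp add: eq\<close>)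
    next
      case False
      then have "e < b" using eb by simp
      with less.IH[of e k' "he e"] bk obtain p where
        "degree p \<le> e" "\<forall>c. Sd k' N (\<lambda>z. real z ^ e * he e (z mod N)) c = poly p (real c)"
        by auto
      then show ?thesis using eb by (intro exI[of _ p]) auto
    qed
  qed
  from bchoice[OF this] obtain P where P: "\<forall>e\<in>{..b}. degree (P e) \<le> b \<and>
      (\<forall>c. Sd k' N (\<lambda>z. real z ^ e * he e (z mod N)) c = poly (P e) (real c))"
    ..
  show ?case
  proof (intro exI conjI allI)
    show "degree (\<Sum>e\<le>b. smult (real (b choose e)) (P e)) \<le> b"
      by (rule degree_sum_le) (use P in \<open>auto intro: le_trans[OF degree_smult_le]\<close>)
    fix c
    show "Sd k N (\<lambda>y. real y ^ b * h (y mod N)) c = poly (\<Sum>e\<le>b. smult (real (b choose e)) (P e)) (real c)"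
      unfolding red poly_sum using P by simp
  qed
qed



lemma div_pow_expand:
  fixes y N m :: nat
  assumes N: "N > 0"
  shows "real (y div N) ^ m =
    (\<Sum>a\<le>m. (real (m choose a) / real N ^ m) * (real y ^ a * (- real (y mod N)) ^ (m - a)))"
proof -
  have e: "N * (y div N) + y mod N = y" by simp
  have "real y = real (N * (y div N) + y mod N)" using e by simp
  then have "real y = real N * real (y div N) + real (y mod N)" by (simp only: of_nat_add of_nat_mult)
  then have "real (y div N) = (real y + - real (y mod N)) / real N" using N by (simp add: eq_divide_eq)
  then have "real (y div N) ^ m = (real y + - real (y mod N)) ^ m / real N ^ m"
    by (simp add: power_divide)
  also have "\<dots> = (\<Sum>a\<le>m. real (m choose a) * real y ^ a * (- real (y mod N)) ^ (m - a)) / real N ^ m"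
    by (subst binomial_ring) simp
  finally show ?thesis by (auto simp: sum_divide_distrib intro!: sum.cong)
qed

lemma Sd_div_pow_poly:
  assumes N: "N > 0" and mk: "m < k"
  shows "\<exists>p. degree p \<le> m \<and> coeff p m = real N ^ k / real N ^ m \<and>
     (\<forall>c. Sd k N (\<lambda>y. real (y div N) ^ m) c = poly p (real c))"
proof -
  define g where "g a r = (- real r) ^ (m - a)" for a r
  have red: "Sd k N (\<lambda>y. real (y div N) ^ m) c =
     (\<Sum>a\<le>m. (real (m choose a) / real N ^ m) * Sd k N (\<lambda>y. real y ^ a * g a (y mod N)) c)" for c
    unfolding div_pow_expand[OF N] g_def
    by (subst Sd_sum) (simp, rule sum.cong[OF refl], rule Sd_cmult)
  have "\<forall>a\<in>{..m}. \<exists>p. degree p \<le> a \<and> (a = m \<longrightarrow> coeff p m = real N ^ k) \<and>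
      (\<forall>c. Sd k N (\<lambda>y. real y ^ a * g a (y mod N)) c = poly p (real c))"
  proof
    fix a assume "a \<in> {..m}"
    then have am: "a \<le> m" by simp
    show "\<exists>p. degree p \<le> a \<and> (a = m \<longrightarrow> coeff p m = real N ^ k) \<and>
      (\<forall>c. Sd k N (\<lambda>y. real y ^ a * g a (y mod N)) c = poly p (real c))"
    proof (cases "a = m")
      case True
      obtain p where "degree p \<le> m" "coeff p m = real N ^ k"
        "\<And>c. Sd k N (\<lambda>y. real y ^ m) c = poly p (real c)"
        using Sd_pow_poly[of m N k] by blast
      then show ?thesis using True by (intro exI[of _ p]) (simp add: g_def)
    next
      case False
      obtain p where "degree p \<le> a" "\<forall>c. Sd k N (\<lambda>y. real y ^ a * g a (y mod N)) c = poly p (real c)"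
        using Sd_pow_per_poly[OF N, of a k "g a"] am mk by auto
      then show ?thesis using False by (intro exI[of _ p]) simp
    qed
  qed
  from bchoice[OF this] obtain P where P: "\<forall>a\<in>{..m}. degree (P a) \<le> a \<and> (a = m \<longrightarrow> coeff (P a) m = real N ^ k) \<and>
      (\<forall>c. Sd k N (\<lambda>y. real y ^ a * g a (y mod N)) c = poly (P a) (real c))" ..
  define q where "q = (\<Sum>a\<le>m. smult (real (m choose a) / real N ^ m) (P a))"
  show ?thesis
  proof (intro exI conjI allI)
    show "degree q \<le> m"
      unfolding q_def
    proof (rule degree_sum_le)
      fix a assume "a \<in> {..m}"
      then have "degree (P a) \<le> a" "a \<le> m" using P by auto
      then have "degree (P a) \<le> m" by linarith
      then show "degree (smult (real (m choose a) / real N ^ m) (P a)) \<le> m"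
        by (rule le_trans[OF degree_smult_le])
    qed simp
    have "coeff q m = (\<Sum>a\<le>m. real (m choose a) / real N ^ m * coeff (P a) m)"
      unfolding q_def by (simp add: coeff_sum)
    also have "\<dots> = real (m choose m) / real N ^ m * coeff (P m) m +
        (\<Sum>a\<in>{..m} - {m}. real (m choose a) / real N ^ m * coeff (P a) m)"
      by (subst sum.remove[of _ m]) auto
    also have "(\<Sum>a\<in>{..m} - {m}. real (m choose a) / real N ^ m * coeff (P a) m) = 0"
    proof (rule sum.neutral, rule ballI)
      fix a assume "a \<in> {..m} - {m}"
      then have "a < m" "degree (P a) \<le> a" using P by auto
      then show "real (m choose a) / real N ^ m * coeff (P a) m = 0"
        by (simp add: coeff_eq_0)
    qed
    finally show "coeff q m = real N ^ k / real N ^ m" using P by simp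
    fix c
    show "Sd k N (\<lambda>y. real (y div N) ^ m) c = poly q (real c)"
      unfolding red q_def poly_sum using P by simp
  qed
qed



lemma Sd_poly_div:
  assumes N: "N > 0" and qk: "degree q < k"
  shows "\<exists>q'. degree q' \<le> degree q \<and> coeff q' (degree q) = real N ^ k / real N ^ degree q * lead_coeff q \<and>
     (\<forall>c. Sd k N (\<lambda>y. poly q (real (y div N))) c = poly q' (real c))"
proof -
  let ?m = "degree q"
  have red: "Sd k N (\<lambda>y. poly q (real (y div N))) c =
      (\<Sum>i\<le>?m. coeff q i * Sd k N (\<lambda>y. real (y div N) ^ i) c)" for c
    unfolding poly_altdef
    by (subst Sd_sum) (simp, rule sum.cong[OF refl], rule Sd_cmult)
  have "\<forall>i\<in>{..?m}. \<exists>p. degree p \<le> i \<and> coeff p i = real N ^ k / real N ^ i \<and>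
     (\<forall>c. Sd k N (\<lambda>y. real (y div N) ^ i) c = poly p (real c))"
    using Sd_div_pow_poly[OF N] qk by auto
  from bchoice[OF this] obtain P where P: "\<forall>i\<in>{..?m}. degree (P i) \<le> i \<and> coeff (P i) i = real N ^ k / real N ^ i \<and>
     (\<forall>c. Sd k N (\<lambda>y. real (y div N) ^ i) c = poly (P i) (real c))" ..
  define q' where "q' = (\<Sum>i\<le>?m. smult (coeff q i) (P i))"
  show ?thesis
  proof (intro exI conjI allI)
    show "degree q' \<le> ?m"
      unfolding q'_def
    proof (rule degree_sum_le)
      fix a assume "a \<in> {..?m}"
      then have "degree (P a) \<le> a" "a \<le> ?m" using P by auto
      then have "degree (P a) \<le> ?m" by linarith
      then show "degree (smult (coeff q a) (P a)) \<le> ?m"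
        by (rule le_trans[OF degree_smult_le])
    qed simp
    have "coeff q' ?m = (\<Sum>i\<le>?m. coeff q i * coeff (P i) ?m)"
      unfolding q'_def by (simp add: coeff_sum)
    also have "\<dots> = coeff q ?m * coeff (P ?m) ?m +
        (\<Sum>i\<in>{..?m} - {?m}. coeff q i * coeff (P i) ?m)"
      by (subst sum.remove[of _ ?m]) auto
    also have "(\<Sum>i\<in>{..?m} - {?m}. coeff q i * coeff (P i) ?m) = 0"
    proof (rule sum.neutral, rule ballI)
      fix a assume "a \<in> {..?m} - {?m}"
      then have "a < ?m" "degree (P a) \<le> a" using P by auto
      then show "coeff q a * coeff (P a) ?m = 0"
        by (simp add: coeff_eq_0)
    qed
    finally show "coeff q' ?m = real N ^ k / real N ^ ?m * lead_coeff q" using P by simp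
    fix c
    show "Sd k N (\<lambda>y. poly q (real (y div N))) c = poly q' (real c)"
      unfolding red q'_def poly_sum using P by simp
  qed
qed

lemma interp:
  fixes f :: "nat \<Rightarrow> real"
  shows "\<exists>q. degree q \<le> n \<and> (\<forall>i\<le>n. poly q (real i) = f i)"
proof (induction n)
  case 0
  show ?case by (rule exI[of _ "[:f 0:]"]) simp
next
  case (Suc n)
  then obtain q where q: "degree q \<le> n" "\<And>i. i \<le> n \<Longrightarrow> poly q (real i) = f i" by blast
  define w where "w = (\<Prod>i\<le>n. [:- real i, 1:])"
  have pw: "poly w x = (\<Prod>i\<le>n. x - real i)" for x
    unfolding w_def poly_prod by simp
  have dw: "degree w \<le> Suc n"
  proof -
    have "degree w \<le> (\<Sum>i\<le>n. degree [:- real i, 1:])"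
      unfolding w_def using degree_prod_sum_le[of "{..n}" "\<lambda>i. [:- real i, 1:]"] by (simp add: o_def)
    then show ?thesis by simp
  qed
  have w0: "poly w (real i) = 0" if "i \<le> n" for i
    unfolding pw using that by (force simp: prod_zero_iff)
  have wn: "poly w (real (Suc n)) \<noteq> 0"
    unfolding pw by (auto simp: prod_zero_iff)
  define \<alpha> where "\<alpha> = (f (Suc n) - poly q (real (Suc n))) / poly w (real (Suc n))"
  show ?case
  proof (intro exI conjI allI impI)
    show "degree (q + smult \<alpha> w) \<le> Suc n"
      using q(1) dw by (intro degree_add_le le_trans[OF degree_smult_le]) auto
    fix i assume "i \<le> Suc n"
    then consider "i \<le> n" | "i = Suc n" by linarith
    then show "poly (q + smult \<alpha> w) (real i) = f i"
    proof cases
      case 1 then show ?thesis using q(2) w0 by simp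
    next
      case 2 then show ?thesis using wn by (simp add: \<alpha>_def)
    qed
  qed
qed

lemma digs_sum_bound:
  assumes "d \<in> digs k N" "c < k"
  shows "(c + (\<Sum>i<k. d i)) div N < k"
proof (cases "N = 0")
  case True then show ?thesis using assms(2) by simp
next
  case False
  have "(\<Sum>i<k. d i) \<le> (\<Sum>i<k. N - 1)"
  proof (rule sum_mono)
    fix i assume "i \<in> {..<k}"
    then have "d i < N" using assms(1) by (auto simp: digs_def PiE_iff)
    then show "d i \<le> N - 1" by linarith
  qed
  then have "(\<Sum>i<k. d i) \<le> k * (N - 1)" by simp
  then have "c + (\<Sum>i<k. d i) < k * N" using assms(2) False
    by (cases N) (auto simp: algebra_simps)
  then show ?thesis by (simp add: less_mult_imp_div_less)
qed

lemma Sd_cong_div: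
  assumes "c < k" "\<And>x. x < k \<Longrightarrow> f x = g x"
  shows "Sd k N (\<lambda>y. f (y div N)) c = Sd k N (\<lambda>y. g (y div N)) c"
  unfolding Sd_def using assms digs_sum_bound by (intro sum.cong) auto

lemma T_sum:
  assumes "c < k"
  shows "(\<Sum>c'<k. holte_T k N c c' * f c') = Sd k N (\<lambda>y. f (y div N)) c / real N ^ k"
proof -
  let ?g = "\<lambda>d. ((\<Sum>i<k. d i) + c) div N"
  have H: "holte_H k N c c' = card {d \<in> digs k N. ?g d = c'}" for c'
    unfolding holte_H_def digs_def by simp
  have "(\<Sum>c'<k. real (holte_H k N c c') * f c') = (\<Sum>c'<k. \<Sum>d\<in>{d \<in> digs k N. ?g d = c'}. f (?g d))"
    unfolding H by (intro sum.cong refl) simp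
  also have "\<dots> = (\<Sum>d\<in>digs k N. f (?g d))"
    using digs_sum_bound[OF _ assms] by (intro sum.group) (auto simp: add.commute)
  also have "\<dots> = Sd k N (\<lambda>y. f (y div N)) c"
    unfolding Sd_def by (simp add: add.commute)
  finally show ?thesis
    unfolding holte_T_def by (simp add: sum_divide_distrib[symmetric])
qed



definition eigpoly :: "nat \<Rightarrow> nat \<Rightarrow> nat \<Rightarrow> real poly \<Rightarrow> bool" where
  "eigpoly k N j q \<longleftrightarrow> (\<forall>c<k. Sd k N (\<lambda>y. poly q (real (y div N))) c = real N ^ k / real N ^ j * poly q (real c))"

lemma Sd_diff: "Sd k N (\<lambda>y. f y - g y) c = Sd k N f c - Sd k N g c"
  unfolding Sd_def by (simp add: sum_subtractf)

lemma eig_degree: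
  assumes N: "N \<ge> 2" and qk: "degree q < k" and q0: "q \<noteq> 0" and E: "eigpoly k N j q"
  shows "degree q = j"
proof -
  have N0: "N > 0" using N by simp
  obtain q' where q': "degree q' \<le> degree q"
    "coeff q' (degree q) = real N ^ k / real N ^ degree q * lead_coeff q"
    "\<And>c. Sd k N (\<lambda>y. poly q (real (y div N))) c = poly q' (real c)"
    using Sd_poly_div[OF N0 qk] by blast
  have eq: "q' = smult (real N ^ k / real N ^ j) q"
  proof (rule poly_eqI_degree[of "real ` {..<k}"])
    fix x assume "x \<in> real ` {..<k}"
    then obtain c where c: "c < k" "x = real c" by auto
    show "poly q' x = poly (smult (real N ^ k / real N ^ j) q) x"
      using E c q'(3)[of c] unfolding eigpoly_def by simp
  next
    have ck: "card (real ` {..<k}) = k" by (simp add: card_image)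
    show "degree q' < card (real ` {..<k})" unfolding ck using q'(1) qk by linarith
    show "degree (smult (real N ^ k / real N ^ j) q) < card (real ` {..<k})"
      unfolding ck using qk degree_smult_le[of "real N ^ k / real N ^ j" q] by linarith
  qed
  have c2: "coeff q' (degree q) = real N ^ k / real N ^ j * lead_coeff q" unfolding eq by simp
  have "real N ^ k / real N ^ degree q * lead_coeff q = real N ^ k / real N ^ j * lead_coeff q"
    by (metis q'(2) c2)
  then have "real N ^ k / real N ^ degree q = real N ^ k / real N ^ j"
    using q0 by simp
  then have "real N ^ degree q = real N ^ j" using N0 by (simp add: field_simps)
  then show ?thesis using N by (simp add: power_inject_exp)
qed

lemma holte_v_eq:
  assumes N: "N \<ge> 2" and jk: "j < k" and dP: "degree P = j" and P0: "poly P 0 = 1"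
    and EP: "eigpoly k N j P"
  shows "holte_v k N j = (\<lambda>i. if i < k then poly P (real i) else 0)"
proof -
  have N0: "N > 0" using N by simp
  define vP where "vP = (\<lambda>i. if i < k then poly P (real i) else 0)"
  have eig_iff: "is_holte_eigvec k N j v \<longleftrightarrow>
      (\<forall>c<k. Sd k N (\<lambda>y. v (y div N)) c = real N ^ k / real N ^ j * v c) \<and> v 0 = 1 \<and> (\<forall>i\<ge>k. v i = 0)" for v
    unfolding is_holte_eigvec_def using T_sum N0 by (auto simp: field_simps)
  have A: "is_holte_eigvec k N j vP"
    unfolding eig_iff
  proof (intro conjI allI impI)
    fix c assume c: "c < k"
    have "Sd k N (\<lambda>y. vP (y div N)) c = Sd k N (\<lambda>y. poly P (real (y div N))) c"
      by (rule Sd_cong_div[OF c]) (simp add: vP_def)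
    then show "Sd k N (\<lambda>y. vP (y div N)) c = real N ^ k / real N ^ j * vP c"
      using EP c unfolding eigpoly_def vP_def by simp
  qed (use jk P0 in \<open>auto simp: vP_def\<close>)
  have B: "v = vP" if V: "is_holte_eigvec k N j v" for v
  proof -
    have V1: "\<forall>c<k. Sd k N (\<lambda>y. v (y div N)) c = real N ^ k / real N ^ j * v c"
      and V0: "v 0 = 1" and V2: "\<forall>i\<ge>k. v i = 0" using V unfolding eig_iff by auto
    obtain q where q: "degree q \<le> k - 1" "\<And>i. i \<le> k - 1 \<Longrightarrow> poly q (real i) = v i"
      using interp[of "k - 1" v] by blast
    have qk: "degree q < k" using q(1) jk by linarith
    have qv: "poly q (real i) = v i" if "i < k" for i using q(2) that by simp
    have Eq: "eigpoly k N j q"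
      unfolding eigpoly_def
    proof (intro allI impI)
      fix c assume c: "c < k"
      have "Sd k N (\<lambda>y. poly q (real (y div N))) c = Sd k N (\<lambda>y. v (y div N)) c"
        by (rule Sd_cong_div[OF c]) (simp add: qv)
      then show "Sd k N (\<lambda>y. poly q (real (y div N))) c = real N ^ k / real N ^ j * poly q (real c)"
        using V1 c qv by simp
    qed
    have q0: "q \<noteq> 0" using qv[of 0] jk V0 by auto
    have dq: "degree q = j" by (rule eig_degree[OF N qk q0 Eq])
    have P0': "P \<noteq> 0" using P0 by auto
    define \<alpha> where "\<alpha> = lead_coeff q / lead_coeff P"
    define r where "r = q - smult \<alpha> P"
    have Er: "eigpoly k N j r"
      using Eq EP unfolding eigpoly_def r_def
      by (simp add: Sd_diff Sd_cmult algebra_simps)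
    have lP: "coeff P j \<noteq> 0" using dP P0' by (metis leading_coeff_0_iff)
    have cr: "coeff r j = 0"
      unfolding r_def \<alpha>_def using dq dP lP by simp
    have dr: "degree r \<le> j"
      unfolding r_def using dq dP by (intro degree_diff_le) (auto intro: le_trans[OF degree_smult_le])
    have r0: "r = 0"
    proof (rule ccontr)
      assume "r \<noteq> 0"
      then have "degree r = j" using eig_degree[OF N _ _ Er] dr jk by linarith
      moreover have "lead_coeff r \<noteq> 0" using \<open>r \<noteq> 0\<close> by simp
      ultimately show False using cr by simp
    qed
    then have qP: "q = smult \<alpha> P" unfolding r_def by simp
    have "\<alpha> = 1" using qv[of 0] jk V0 P0 unfolding qP by simp
    then have "q = P" using qP by simp
    then show "v = vP"
      unfolding vP_def using qv V2 by (auto simp: fun_eq_iff)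
  qed
  show ?thesis
    unfolding holte_v_def vP_def[symmetric]
  proof (rule the_equality)
    show "is_holte_eigvec k N j vP" by (rule A)
  next
    fix v assume "is_holte_eigvec k N j v"
    then show "v = vP" by (rule B)
  qed
qed



lemma fsum1: "(\<Sum>t<N. X + real t) = real N * X + real N * (real N - 1) / 2"
  by (induction N) (simp_all add: field_simps)

lemma fsum2: "(\<Sum>t<N. (X + real t)^2) = real N * X^2 + X * real N * (real N - 1) + real N * (real N - 1) * (2 * real N - 1) / 6"
  by (induction N) (simp_all add: field_simps power2_eq_square)

lemma fsum3: "(\<Sum>t<N. (X + real t)^3) = real N * X^3 + 3 * X^2 * (real N * (real N - 1) / 2)
   + 3 * X * (real N * (real N - 1) * (2 * real N - 1) / 6) + (real N * (real N - 1) / 2)^2"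
  by (induction N) (simp_all add: field_simps power2_eq_square power3_eq_cube)

lemma mom1: "Sd k N (\<lambda>y. real y) c = real N ^ k * (real c + real k * (real N - 1) / 2)"
proof (induction k arbitrary: c)
  case 0 then show ?case by simp
next
  case (Suc k)
  have "Sd (Suc k) N (\<lambda>y. real y) c = (\<Sum>t<N. real N ^ k * ((real c + real k * (real N - 1) / 2) + real t))"
    unfolding Sd_Suc Suc by (simp add: ac_simps)
  also have "\<dots> = real N ^ k * (\<Sum>t<N. (real c + real k * (real N - 1) / 2) + real t)"
    by (simp add: sum_distrib_left)
  also have "\<dots> = real N ^ Suc k * (real c + real (Suc k) * (real N - 1) / 2)"
    unfolding fsum1 by (simp add: field_simps)
  finally show ?case .
qed

lemma mom2: "Sd k N (\<lambda>y. real y ^ 2) c = real N ^ k * ((real c + real k * (real N - 1) / 2)^2 + real k * (real N ^ 2 - 1) / 12)"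
proof (induction k arbitrary: c)
  case 0 then show ?case by simp
next
  case (Suc k)
  let ?X = "real c + real k * (real N - 1) / 2"
  have "Sd (Suc k) N (\<lambda>y. real y ^ 2) c = (\<Sum>t<N. real N ^ k * ((?X + real t)^2 + real k * (real N ^ 2 - 1) / 12))"
    unfolding Sd_Suc Suc by (simp add: ac_simps)
  also have "\<dots> = real N ^ k * (\<Sum>t<N. (?X + real t)^2 + real k * (real N ^ 2 - 1) / 12)"
    by (simp only: sum_distrib_left)
  also have "\<dots> = real N ^ k * ((\<Sum>t<N. (?X + real t)^2) + real N * (real k * (real N ^ 2 - 1) / 12))"
    by (simp only: sum.distrib sum_constant card_lessThan)
  also have "\<dots> = real N ^ Suc k * ((real c + real (Suc k) * (real N - 1) / 2)^2 + real (Suc k) * (real N ^ 2 - 1) / 12)"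
    unfolding fsum2 by (simp add: field_simps power2_eq_square)
  finally show ?case .
qed

lemma mom3: "Sd k N (\<lambda>y. real y ^ 3) c = real N ^ k * ((real c + real k * (real N - 1) / 2)^3
    + (real c + real k * (real N - 1) / 2) * real k * (real N ^ 2 - 1) / 4)"
proof (induction k arbitrary: c)
  case 0 then show ?case by simp
next
  case (Suc k)
  let ?X = "real c + real k * (real N - 1) / 2"
  have "Sd (Suc k) N (\<lambda>y. real y ^ 3) c = (\<Sum>t<N. real N ^ k * ((?X + real t)^3 + (?X + real t) * real k * (real N ^ 2 - 1) / 4))"
    unfolding Sd_Suc Suc by (simp add: ac_simps)
  also have "\<dots> = real N ^ k * (\<Sum>t<N. (?X + real t)^3 + (?X + real t) * (real k * (real N ^ 2 - 1) / 4))"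
    by (simp only: sum_distrib_left times_divide_eq_right mult.assoc)
  also have "\<dots> = real N ^ k * ((\<Sum>t<N. (?X + real t)^3) + (\<Sum>t<N. ?X + real t) * (real k * (real N ^ 2 - 1) / 4))"
    by (subst sum.distrib) (simp only: sum_distrib_right)
  also have "\<dots> = real N ^ Suc k * ((real c + real (Suc k) * (real N - 1) / 2)^3
    + (real c + real (Suc k) * (real N - 1) / 2) * real (Suc k) * (real N ^ 2 - 1) / 4)"
    unfolding fsum3 fsum1 by (simp add: field_simps power2_eq_square power3_eq_cube)
  finally show ?case .
qed



lemma psum1: "(\<Sum>t<N. real t) = real N * (real N - 1) / 2"
  by (induction N) (simp_all add: field_simps)
lemma psum2: "(\<Sum>t<N. real t ^ 2) = real N * (real N - 1) * (2 * real N - 1) / 6"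
  by (induction N) (simp_all add: field_simps power2_eq_square)
lemma psum3: "(\<Sum>t<N. real t ^ 3) = (real N * (real N - 1) / 2)^2"
  by (induction N) (simp_all add: field_simps power2_eq_square power3_eq_cube)

definition piN :: "nat \<Rightarrow> nat \<Rightarrow> real" where "piN N r = real r * (real N - real r)"
definition kapN :: "nat \<Rightarrow> nat \<Rightarrow> real" where "kapN N r = real r * (real N - real r) * (real N - 2 * real r)"

lemma sum_piN: "(\<Sum>r<N. piN N r) = real N * (real N ^ 2 - 1) / 6"
proof -
  have "(\<Sum>r<N. piN N r) = real N * (\<Sum>r<N. real r) - (\<Sum>r<N. real r ^ 2)"
    unfolding piN_def by (simp add: algebra_simps power2_eq_square sum_distrib_left sum_subtractf)
  then show ?thesis unfolding psum1 psum2 by (simp add: field_simps power2_eq_square)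
qed

lemma sum_kapN: "(\<Sum>r<N. kapN N r) = 0"
proof -
  have "(\<Sum>r<N. kapN N r) = real N ^ 2 * (\<Sum>r<N. real r) - 3 * real N * (\<Sum>r<N. real r ^ 2) + 2 * (\<Sum>r<N. real r ^ 3)"
    unfolding kapN_def by (simp add: algebra_simps power2_eq_square power3_eq_cube sum_distrib_left sum_subtractf sum.distrib)
  then show ?thesis unfolding psum1 psum2 psum3 by (simp add: field_simps power2_eq_square)
qed

lemma div_split:
  assumes N: "N > 0" and t: "t < N"
  shows "(z + t) div N = (if t < N - z mod N then z div N else Suc (z div N))"
proof -
  have a: "(z + t) div N = z div N + (z mod N + t) div N"
    using t by (subst div_add1_eq) simp
  have r: "z mod N < N" using N by simp
  show ?thesis
  proof (cases "t < N - z mod N")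
    case True
    then have "z mod N + t < N" by linarith
    then show ?thesis using a True by simp
  next
    case False
    then have b: "N \<le> z mod N + t" by linarith
    have "(z mod N + t) div N = Suc ((z mod N + t - N) div N)" using le_div_geq[OF N b] .
    also have "(z mod N + t - N) div N = 0" using r t by (intro div_less) linarith
    finally show ?thesis using a False by simp
  qed
qed

lemma digit1:
  fixes f :: "nat \<Rightarrow> real"
  assumes N: "N > 0"
  shows "(\<Sum>t<N. f ((z + t) div N)) = real (N - z mod N) * f (z div N) + real (z mod N) * f (Suc (z div N))"
proof -
  have r: "z mod N < N" using N by simp
  have "(\<Sum>t<N. f ((z + t) div N)) = (\<Sum>t<N. if t < N - z mod N then f (z div N) else f (Suc (z div N)))"
    by (intro sum.cong refl) (simp add: div_split[OF N])
  also have "\<dots> = (\<Sum>t\<in>{..<N} \<inter> {t. t < N - z mod N}. f (z div N)) + (\<Sum>t\<in>{..<N} \<inter> - {t. t < N - z mod N}. f (Suc (z div N)))"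
    by (rule sum.If_cases) simp
  also have "{..<N} \<inter> {t. t < N - z mod N} = {..<N - z mod N}" by auto
  also have "{..<N} \<inter> - {t. t < N - z mod N} = {N - z mod N..<N}" by auto
  finally show ?thesis using r by simp
qed

lemma realz: "N > 0 \<Longrightarrow> real z = real N * real (z div N) + real (z mod N)"
proof -
  have e: "N * (z div N) + z mod N = z" by simp
  have "real z = real (N * (z div N) + z mod N)" using e by simp
  then show "real z = real N * real (z div N) + real (z mod N)" by (simp only: of_nat_add of_nat_mult)
qed

lemma D1: "N > 0 \<Longrightarrow> (\<Sum>t<N. real ((z + t) div N)) = real z"
  using digit1[of N "\<lambda>x. real x" z] realz[of N z] by (simp add: of_nat_diff algebra_simps)

lemma D2: "N > 0 \<Longrightarrow> (\<Sum>t<N. real ((z + t) div N) ^ 2) = (real z ^ 2 + piN N (z mod N)) / real N"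
  using digit1[of N "\<lambda>x. real x ^ 2" z] realz[of N z]
  by (simp add: of_nat_diff field_simps power2_eq_square piN_def)

lemma D3: "N > 0 \<Longrightarrow> (\<Sum>t<N. real ((z + t) div N) ^ 3) =
   (real z ^ 3 + 3 * real z * piN N (z mod N) + kapN N (z mod N)) / real N ^ 2"
  using digit1[of N "\<lambda>x. real x ^ 3" z] realz[of N z]
  by (simp add: of_nat_diff field_simps power2_eq_square power3_eq_cube piN_def kapN_def)



lemma M1:
  assumes N: "N > 0"
  shows "Sd (Suc k) N (\<lambda>y. real (y div N)) c = real N ^ k * (real c + real k * (real N - 1) / 2)"
proof -
  have "Sd (Suc k) N (\<lambda>y. real (y div N)) c = Sd k N (\<lambda>z. real z) c"
    unfolding Sd_Suc' by (rule Sd_cong) (simp add: D1[OF N])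
  then show ?thesis by (simp add: mom1)
qed

lemma M2:
  assumes N: "N > 0"
  shows "Sd (Suc (Suc k)) N (\<lambda>y. real (y div N) ^ 2) c =
    inverse (real N) * (real N ^ Suc k * ((real c + real (Suc k) * (real N - 1) / 2)^2 + real (Suc k) * (real N ^ 2 - 1) / 12))
     + inverse (real N) * (real N ^ k * (real N * (real N ^ 2 - 1) / 6))"
proof -
  have "Sd (Suc (Suc k)) N (\<lambda>y. real (y div N) ^ 2) c =
      Sd (Suc k) N (\<lambda>z. inverse (real N) * real z ^ 2 + inverse (real N) * piN N (z mod N)) c"
    unfolding Sd_Suc'[of "Suc k"] by (rule Sd_cong) (simp add: D2[OF N] divide_inverse distrib_left ac_simps)
  also have "\<dots> = inverse (real N) * Sd (Suc k) N (\<lambda>z. real z ^ 2) c + inverse (real N) * Sd (Suc k) N (\<lambda>z. piN N (z mod N)) c"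
    by (simp only: Sd_add Sd_cmult)
  also have "Sd (Suc k) N (\<lambda>z. piN N (z mod N)) c = real N ^ k * (real N * (real N ^ 2 - 1) / 6)"
    using Sd_periodic[OF N, of k "piN N" c] sum_piN[of N] by simp
  finally show ?thesis unfolding mom2 .
qed

lemma W:
  assumes N: "N > 0"
  shows "Sd (Suc (Suc k)) N (\<lambda>z. real z * piN N (z mod N)) c =
     (real N * (real N ^ 2 - 1) / 6) * (real N ^ Suc k * (real c + real (Suc k) * (real N - 1) / 2))
     + real N ^ k * ((real N * (real N ^ 2 - 1) / 6) * (real N * (real N - 1) / 2))"
proof -
  define \<sigma> where "\<sigma> r = (\<Sum>t<N. real t * piN N ((r + t) mod N))" for r
  have inner: "(\<Sum>t<N. real (w + t) * piN N ((w + t) mod N)) =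
      (\<Sum>r<N. piN N r) * real w + \<sigma> (w mod N)" for w
  proof -
    have "(\<Sum>t<N. real (w + t) * piN N ((w + t) mod N)) =
        real w * (\<Sum>t<N. piN N ((w + t) mod N)) + (\<Sum>t<N. real t * piN N ((w + t) mod N))"
      by (simp add: algebra_simps sum.distrib sum_distrib_left)
    moreover have "(\<Sum>t<N. real t * piN N ((w + t) mod N)) = \<sigma> (w mod N)"
      unfolding \<sigma>_def by (intro sum.cong refl) (simp only: mod_add_left_eq)
    ultimately show ?thesis unfolding sum_mod_shift[OF N] by simp
  qed
  have "Sd (Suc (Suc k)) N (\<lambda>z. real z * piN N (z mod N)) c =
      Sd (Suc k) N (\<lambda>w. (\<Sum>r<N. piN N r) * real w + \<sigma> (w mod N)) c"
    unfolding Sd_Suc'[of "Suc k"] by (rule Sd_cong) (rule inner)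
  also have "\<dots> = (\<Sum>r<N. piN N r) * Sd (Suc k) N (\<lambda>w. real w) c + Sd (Suc k) N (\<lambda>w. \<sigma> (w mod N)) c"
    by (simp only: Sd_add Sd_cmult)
  also have "Sd (Suc k) N (\<lambda>w. \<sigma> (w mod N)) c = real N ^ k * (\<Sum>r<N. \<sigma> r)"
    by (rule Sd_periodic[OF N])
  also have "(\<Sum>r<N. \<sigma> r) = (\<Sum>t<N. real t * (\<Sum>r<N. piN N ((t + r) mod N)))"
    unfolding \<sigma>_def by (subst sum.swap) (simp add: sum_distrib_left add.commute)
  also have "\<dots> = (\<Sum>t<N. real t) * (\<Sum>r<N. piN N r)"
    unfolding sum_mod_shift[OF N] by (simp add: sum_distrib_right)
  finally show ?thesis unfolding mom1 sum_piN psum1 by (simp add: algebra_simps)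
qed

lemma M3:
  assumes N: "N > 0"
  shows "Sd (Suc (Suc (Suc k))) N (\<lambda>y. real (y div N) ^ 3) c =
    inverse (real N ^ 2) * (real N ^ Suc (Suc k) * ((real c + real (Suc (Suc k)) * (real N - 1) / 2)^3
         + (real c + real (Suc (Suc k)) * (real N - 1) / 2) * real (Suc (Suc k)) * (real N ^ 2 - 1) / 4))
     + ((3 * inverse (real N ^ 2)) * ((real N * (real N ^ 2 - 1) / 6) * (real N ^ Suc k * (real c + real (Suc k) * (real N - 1) / 2))
     + real N ^ k * ((real N * (real N ^ 2 - 1) / 6) * (real N * (real N - 1) / 2)))
     + inverse (real N ^ 2) * 0)"
proof -
  let ?i = "inverse (real N ^ 2)"
  have "Sd (Suc (Suc (Suc k))) N (\<lambda>y. real (y div N) ^ 3) c =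
      Sd (Suc (Suc k)) N (\<lambda>z. ?i * real z ^ 3 + ((3 * ?i) * (real z * piN N (z mod N)) + ?i * kapN N (z mod N))) c"
    unfolding Sd_Suc'[of "Suc (Suc k)"] by (rule Sd_cong) (simp add: D3[OF N] divide_inverse distrib_left ac_simps)
  also have "\<dots> = ?i * Sd (Suc (Suc k)) N (\<lambda>z. real z ^ 3) c + ((3 * ?i) * Sd (Suc (Suc k)) N (\<lambda>z. real z * piN N (z mod N)) c
      + ?i * Sd (Suc (Suc k)) N (\<lambda>z. kapN N (z mod N)) c)"
    by (simp only: Sd_add Sd_cmult)
  also have "Sd (Suc (Suc k)) N (\<lambda>z. kapN N (z mod N)) c = 0"
    using Sd_periodic[OF N, of "Suc k" "kapN N" c] sum_kapN[of N] by simp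
  finally show ?thesis unfolding mom3 W[OF N] .
qed



lemma alg2:
  fixes K Nr X A \<beta> :: real
  assumes h: "Nr \<noteq> 0" and hb: "\<beta> * ((3 * K - 1) * (K - 2)) = 12"
  shows "A * Nr ^ 3 * 1 + ((- \<beta> * (K - 1)) * (A * Nr ^ 2 * (X + (K - 1) * (Nr - 1) / 2))
     + \<beta> * (inverse Nr * (A * Nr ^ 2 * ((X + (K - 1) * (Nr - 1) / 2)^2 + (K - 1) * (Nr ^ 2 - 1) / 12))
     + inverse Nr * (A * Nr * (Nr * (Nr ^ 2 - 1) / 6))))
   = A * Nr ^ 3 / Nr ^ 2 * (1 + ((- \<beta> * (K - 1)) * X + \<beta> * X ^ 2))"
  using h hb by (simp add: field_simps power2_eq_square power3_eq_cube) algebra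

definition P2 :: "nat \<Rightarrow> real poly" where
  "P2 k = (let \<beta> = 12 / ((3 * real k - 1) * (real k - 2)) in [:1, - \<beta> * (real k - 1), \<beta>:])"

lemma eig_P2:
  assumes N: "N > 0" and k: "k = Suc (Suc (Suc n))" and n: "n \<ge> 1"
  shows "eigpoly k N 2 (P2 k)"
  unfolding eigpoly_def
proof (intro allI impI)
  fix c
  define \<beta> where "\<beta> = 12 / ((3 * real k - 1) * (real k - 2))"
  define K where "K = real k"
  define A where "A = real N ^ n"
  define X where "X = real c"
  define Nr where "Nr = real N"
  have hb: "\<beta> * ((3 * K - 1) * (K - 2)) = 12" using k unfolding \<beta>_def K_def by simp
  have h: "Nr \<noteq> 0" using N unfolding Nr_def by simp
  have pP: "poly (P2 k) x = 1 + ((- \<beta> * (K - 1)) * x + \<beta> * x ^ 2)" for x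
    unfolding P2_def \<beta>_def Let_def K_def by (simp add: algebra_simps power2_eq_square)
  have e0: "real N ^ k = A * Nr ^ 3" unfolding k A_def Nr_def by (simp add: algebra_simps power3_eq_cube)
  have e1: "Sd k N (\<lambda>y. real (y div N)) c = A * Nr ^ 2 * (X + (K - 1) * (Nr - 1) / 2)"
    unfolding k M1[OF N] A_def K_def X_def Nr_def by (simp add: algebra_simps power2_eq_square)
  have e2: "Sd k N (\<lambda>y. real (y div N) ^ 2) c = inverse Nr * (A * Nr ^ 2 * ((X + (K - 1) * (Nr - 1) / 2)^2 + (K - 1) * (Nr ^ 2 - 1) / 12))
     + inverse Nr * (A * Nr * (Nr * (Nr ^ 2 - 1) / 6))"
    unfolding k M2[OF N, of "Suc n"] A_def K_def X_def Nr_def by (simp add: algebra_simps power2_eq_square)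
  have "Sd k N (\<lambda>y. poly (P2 k) (real (y div N))) c =
     Sd k N (\<lambda>y. 1 + ((- \<beta> * (K - 1)) * real (y div N) + \<beta> * real (y div N) ^ 2)) c"
    unfolding pP ..
  also have "\<dots> = real N ^ k * 1 + ((- \<beta> * (K - 1)) * Sd k N (\<lambda>y. real (y div N)) c
       + \<beta> * Sd k N (\<lambda>y. real (y div N) ^ 2) c)"
    by (simp only: Sd_add Sd_cmult Sd_const)
  also have "\<dots> = A * Nr ^ 3 / Nr ^ 2 * (1 + ((- \<beta> * (K - 1)) * X + \<beta> * X ^ 2))"
    unfolding e0 e1 e2 by (rule alg2[OF h hb])
  finally show "Sd k N (\<lambda>y. poly (P2 k) (real (y div N))) c = real N ^ k / real N ^ 2 * poly (P2 k) (real c)"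
    unfolding pP e0 X_def Nr_def by simp
qed



lemma alg3:
  fixes K Nr X A \<gamma> :: real
  assumes h: "Nr \<noteq> 0" and hg: "\<gamma> * (K * (K - 1) * (K - 3)) = 1"
  shows "A * Nr ^ 3 * 1 + ((- 2 * (K - 2) * (3 * K - 1) * \<gamma>) * (A * Nr ^ 2 * (X + (K - 1) * (Nr - 1) / 2))
     + ((12 * (K - 1) * \<gamma>) * (inverse Nr * (A * Nr ^ 2 * ((X + (K - 1) * (Nr - 1) / 2)^2 + (K - 1) * (Nr ^ 2 - 1) / 12))
     + inverse Nr * (A * Nr * (Nr * (Nr ^ 2 - 1) / 6)))
     + (- 8 * \<gamma>) * (inverse (Nr ^ 2) * (A * Nr ^ 2 * ((X + (K - 1) * (Nr - 1) / 2)^3 + (X + (K - 1) * (Nr - 1) / 2) * (K - 1) * (Nr ^ 2 - 1) / 4))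
       + ((3 * inverse (Nr ^ 2)) * ((Nr * (Nr ^ 2 - 1) / 6) * (A * Nr * (X + (K - 2) * (Nr - 1) / 2))
         + A * ((Nr * (Nr ^ 2 - 1) / 6) * (Nr * (Nr - 1) / 2)))
       + inverse (Nr ^ 2) * 0))))
   = A * Nr ^ 3 / Nr ^ 3 * (1 + ((- 2 * (K - 2) * (3 * K - 1) * \<gamma>) * X + ((12 * (K - 1) * \<gamma>) * X ^ 2 + (- 8 * \<gamma>) * X ^ 3)))"
  using h hg by (simp add: field_simps power2_eq_square power3_eq_cube) algebra

definition P3 :: "nat \<Rightarrow> real poly" where
  "P3 k = (let \<gamma> = 1 / (real k * (real k - 1) * (real k - 3)) in
     [:1, - 2 * (real k - 2) * (3 * real k - 1) * \<gamma>, 12 * (real k - 1) * \<gamma>, - 8 * \<gamma>:])"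

lemma eig_P3:
  assumes N: "N > 0" and k: "k = Suc (Suc (Suc n))" and n: "n \<ge> 1"
  shows "eigpoly k N 3 (P3 k)"
  unfolding eigpoly_def
proof (intro allI impI)
  fix c
  define \<gamma> where "\<gamma> = 1 / (real k * (real k - 1) * (real k - 3))"
  define K where "K = real k"
  define A where "A = real N ^ n"
  define X where "X = real c"
  define Nr where "Nr = real N"
  have hg: "\<gamma> * (K * (K - 1) * (K - 3)) = 1" using k n unfolding \<gamma>_def K_def by simp
  have h: "Nr \<noteq> 0" using N unfolding Nr_def by simp
  have pP: "poly (P3 k) x = 1 + ((- 2 * (K - 2) * (3 * K - 1) * \<gamma>) * x + ((12 * (K - 1) * \<gamma>) * x ^ 2 + (- 8 * \<gamma>) * x ^ 3))" for x
    unfolding P3_def \<gamma>_def Let_def K_def by (simp add: algebra_simps power2_eq_square power3_eq_cube)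
  have e0: "real N ^ k = A * Nr ^ 3" unfolding k A_def Nr_def by (simp add: algebra_simps power3_eq_cube)
  have e1: "Sd k N (\<lambda>y. real (y div N)) c = A * Nr ^ 2 * (X + (K - 1) * (Nr - 1) / 2)"
    unfolding k M1[OF N] A_def K_def X_def Nr_def by (simp add: algebra_simps power2_eq_square)
  have e2: "Sd k N (\<lambda>y. real (y div N) ^ 2) c = inverse Nr * (A * Nr ^ 2 * ((X + (K - 1) * (Nr - 1) / 2)^2 + (K - 1) * (Nr ^ 2 - 1) / 12))
     + inverse Nr * (A * Nr * (Nr * (Nr ^ 2 - 1) / 6))"
    unfolding k M2[OF N, of "Suc n"] A_def K_def X_def Nr_def by (simp add: algebra_simps power2_eq_square)
  have e3: "Sd k N (\<lambda>y. real (y div N) ^ 3) c = inverse (Nr ^ 2) * (A * Nr ^ 2 * ((X + (K - 1) * (Nr - 1) / 2)^3 + (X + (K - 1) * (Nr - 1) / 2) * (K - 1) * (Nr ^ 2 - 1) / 4))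
       + ((3 * inverse (Nr ^ 2)) * ((Nr * (Nr ^ 2 - 1) / 6) * (A * Nr * (X + (K - 2) * (Nr - 1) / 2))
         + A * ((Nr * (Nr ^ 2 - 1) / 6) * (Nr * (Nr - 1) / 2)))
       + inverse (Nr ^ 2) * 0)"
    unfolding k M3[OF N, of n] A_def K_def X_def Nr_def by (simp add: algebra_simps power2_eq_square)
  have "Sd k N (\<lambda>y. poly (P3 k) (real (y div N))) c =
     Sd k N (\<lambda>y. 1 + ((- 2 * (K - 2) * (3 * K - 1) * \<gamma>) * real (y div N) + ((12 * (K - 1) * \<gamma>) * real (y div N) ^ 2 + (- 8 * \<gamma>) * real (y div N) ^ 3))) c"
    unfolding pP ..
  also have "\<dots> = real N ^ k * 1 + ((- 2 * (K - 2) * (3 * K - 1) * \<gamma>) * Sd k N (\<lambda>y. real (y div N)) c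
       + ((12 * (K - 1) * \<gamma>) * Sd k N (\<lambda>y. real (y div N) ^ 2) c + (- 8 * \<gamma>) * Sd k N (\<lambda>y. real (y div N) ^ 3) c))"
    by (simp only: Sd_add Sd_cmult Sd_const)
  also have "\<dots> = A * Nr ^ 3 / Nr ^ 3 * (1 + ((- 2 * (K - 2) * (3 * K - 1) * \<gamma>) * X + ((12 * (K - 1) * \<gamma>) * X ^ 2 + (- 8 * \<gamma>) * X ^ 3)))"
    unfolding e0 e1 e2 e3 by (rule alg3[OF h hg])
  finally show "Sd k N (\<lambda>y. poly (P3 k) (real (y div N))) c = real N ^ k / real N ^ 3 * poly (P3 k) (real c)"
    unfolding pP e0 X_def Nr_def by simp
qed



lemma algQ2:
  fixes B c1 c2 d1 d2 m t \<beta> b :: real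
  assumes "c1 * (t + 1) = B * (m - t)" "c2 * (t + 2) = c1 * (m - (t + 1))"
    "d1 * (t + 1) = (m + 1) * B" "d2 * (t + 2) = (m + 2) * d1"
    "\<beta> * ((3 * (m + 3) - 1) * ((m + 3) - 2)) = 12" "b * (3 * (m + 3) - 1) = - 2 * (3 * (m + 3) - 5)"
    "t + 1 \<noteq> 0" "t + 2 \<noteq> 0"
  shows "d2 * (1 + (- \<beta> * ((m + 3) - 1)) * (t + 2) + \<beta> * (t + 2)^2) = c2 + b * c1 + B"
  using assms by algebra

lemma algQ3:
  fixes B c1 c2 c3 d1 d2 d3 m t \<gamma> e :: real
  assumes "c1 * (t + 1) = B * (m - t)" "c2 * (t + 2) = c1 * (m - (t + 1))" "c3 * (t + 3) = c2 * (m - (t + 2))"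
    "d1 * (t + 1) = (m + 1) * B" "d2 * (t + 2) = (m + 2) * d1" "d3 * (t + 3) = (m + 3) * d2"
    "\<gamma> * ((m + 4) * ((m + 4) - 1) * ((m + 4) - 3)) = 1" "e * (m + 4) = 3 * (m + 4) - 8"
    "t + 1 \<noteq> 0" "t + 2 \<noteq> 0" "t + 3 \<noteq> 0"
  shows "d3 * (1 + (- 2 * ((m + 4) - 2) * (3 * (m + 4) - 1) * \<gamma>) * (t + 3) + (12 * ((m + 4) - 1) * \<gamma>) * (t + 3)^2
      + (- 8 * \<gamma>) * (t + 3)^3) = c3 - e * c2 + e * c1 - B"
  using assms by algebra



lemma cpow: "coeff ([:1, 1:] ^ m :: real poly) i = real (m choose i)"
proof (cases "i \<le> m")
  case True then show ?thesis using coeff_linear_poly_power[OF True, of "1::real" 1] by simp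
next
  case False
  then have "degree ([:1, 1:] ^ m :: real poly) < i" using degree_linear_power[of "1::real" m] by simp
  then show ?thesis using False by (simp add: coeff_eq_0 binomial_eq_0)
qed

lemma bin1: "real (m choose Suc t) * (real t + 1) = real (m choose t) * (real m - real t)"
proof -
  have a: "real (Suc m) * real (m choose t) = real (Suc m choose Suc t) * real (Suc t)"
    using Suc_times_binomial_eq[of m t] by (metis of_nat_mult)
  have b: "real (Suc m choose Suc t) = real (m choose t) + real (m choose Suc t)" by simp
  show ?thesis using a unfolding b by (simp add: algebra_simps)
qed

lemma bin2: "real (Suc m choose Suc t) * (real t + 1) = (real m + 1) * real (m choose t)"
proof -
  have a: "real (Suc m) * real (m choose t) = real (Suc m choose Suc t) * real (Suc t)"
    using Suc_times_binomial_eq[of m t] by (metis of_nat_mult)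
  then show ?thesis by (simp add: algebra_simps)
qed

lemma lhs_coeff:
  assumes "k \<ge> 1"
  shows "coeff (\<Sum>i<k. monom (real (k - 1 choose i) * f i) i) n = real (k - 1 choose n) * f n"
proof (cases "n < k")
  case True then show ?thesis by (simp add: coeff_sum coeff_monom)
next
  case False then show ?thesis using assms by (simp add: coeff_sum coeff_monom binomial_eq_0)
qed

lemma coeff_mult3: "coeff (p * [:a, b, c:]) (Suc (Suc t)) = a * coeff p (Suc (Suc t)) + b * coeff p (Suc t) + c * coeff p t"
  by (simp add: mult_pCons_right add_ac)

lemma coeff_mult4: "coeff (p * [:a, b, c, d:]) (Suc (Suc (Suc t))) =
   a * coeff p (Suc (Suc (Suc t))) + b * coeff p (Suc (Suc t)) + c * coeff p (Suc t) + d * coeff p t"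
  by (simp add: mult_pCons_right add_ac)

lemma Q2_identity:
  assumes k: "k = m + 3"
  shows "(\<Sum>i<k. monom (real (k - 1 choose i) * poly (P2 k) (real i)) i) =
     [:1, 1:] ^ m * [:1, - 2 * (3 * real k - 5) / (3 * real k - 1), 1:]"
proof (rule poly_eqI)
  fix n
  define b where "b = - 2 * (3 * real k - 5) / (3 * real k - 1)"
  define \<beta> where "\<beta> = 12 / ((3 * real k - 1) * (real k - 2))"
  have pP: "poly (P2 k) x = 1 + (- \<beta> * (real k - 1)) * x + \<beta> * x ^ 2" for x
    unfolding P2_def \<beta>_def Let_def by (simp add: algebra_simps power2_eq_square)
  have hb: "\<beta> * ((3 * (real m + 3) - 1) * ((real m + 3) - 2)) = 12"
    unfolding \<beta>_def k by simp
  have hb2: "b * (3 * (real m + 3) - 1) = - 2 * (3 * (real m + 3) - 5)"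
    unfolding b_def k by simp
  have L: "coeff (\<Sum>i<k. monom (real (k - 1 choose i) * poly (P2 k) (real i)) i) n =
      real (Suc (Suc m) choose n) * poly (P2 k) (real n)"
    using lhs_coeff[of k "\<lambda>i. poly (P2 k) (real i)" n] k by simp
  show "coeff (\<Sum>i<k. monom (real (k - 1 choose i) * poly (P2 k) (real i)) i) n =
     coeff ([:1, 1:] ^ m * [:1, - 2 * (3 * real k - 5) / (3 * real k - 1), 1:]) n"
    unfolding L b_def[symmetric]
  proof (cases n)
    case 0
    then show "real (Suc (Suc m) choose n) * poly (P2 k) (real n) = coeff ([:1, 1:] ^ m * [:1, b, 1:]) n"
      by (simp add: pP cpow)
  next
    case (Suc n')
    show "real (Suc (Suc m) choose n) * poly (P2 k) (real n) = coeff ([:1, 1:] ^ m * [:1, b, 1:]) n"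
    proof (cases n')
      case 0
      have "coeff ([:1, 1:] ^ m * [:1, b, 1:]) 1 = real m + b"
        by (simp add: mult_pCons_right cpow)
      moreover have "real (Suc (Suc m) choose 1) * poly (P2 k) 1 = real m + b"
      proof -
        have nz: "8 + 3 * real m \<noteq> 0" by (simp add: add_pos_nonneg)
        have p1: "poly (P2 k) 1 = 1 + (- \<beta> * (real m + 2)) * 1 + \<beta> * 1 ^ 2" using pP[of 1] k by simp
        have c: "real (Suc (Suc m) choose 1) = real m + 2" by simp
        have "((real m + 2) * (1 + (- \<beta> * (real m + 2)) * 1 + \<beta> * 1 ^ 2)) * (8 + 3 * real m) = (real m + b) * (8 + 3 * real m)"
        proof -
          have a2: "\<beta> * ((3 * (real m + 3) - 1) * ((real m + 3) - 2)) * (real m + 2) = 12 * (real m + 2)"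
            using hb by simp
          show ?thesis using a2 hb2 by (simp add: algebra_simps)
        qed
        then show ?thesis unfolding p1 c using mult_right_cancel[OF nz] by blast
      qed
      ultimately show ?thesis using Suc 0 by simp
    next
      case (Suc t)
      have n: "n = Suc (Suc t)" using \<open>n = Suc n'\<close> Suc by simp
      have R: "coeff ([:1, 1:] ^ m * [:1, b, 1:]) n = real (m choose Suc (Suc t)) + b * real (m choose Suc t) + real (m choose t)"
        unfolding n coeff_mult3 cpow by simp
      have Lx: "real (Suc (Suc m) choose n) * poly (P2 k) (real n) =
        real (Suc (Suc m) choose Suc (Suc t)) * (1 + (- \<beta> * ((real m + 3) - 1)) * (real t + 2) + \<beta> * (real t + 2)^2)"
      proof -
        have "poly (P2 k) (real n) = 1 + (- \<beta> * ((real m + 3) - 1)) * (real t + 2) + \<beta> * (real t + 2)^2"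
          using pP[of "real n"] k n by (simp add: add.commute)
        then show ?thesis unfolding n by simp
      qed
      have p1: "real (m choose Suc t) * (real t + 1) = real (m choose t) * (real m - real t)" by (rule bin1)
      have p2: "real (m choose Suc (Suc t)) * (real t + 2) = real (m choose Suc t) * (real m - (real t + 1))"
        using bin1[of m "Suc t"] by (simp add: algebra_simps)
      have p3: "real (Suc m choose Suc t) * (real t + 1) = (real m + 1) * real (m choose t)" by (rule bin2)
      have p4: "real (Suc (Suc m) choose Suc (Suc t)) * (real t + 2) = (real m + 2) * real (Suc m choose Suc t)"
        using bin2[of "Suc m" "Suc t"] by (simp add: algebra_simps)
      have t1: "real t + 1 \<noteq> 0" "real t + 2 \<noteq> 0" by simp_all
      note X = algQ2[OF p1 p2 p3 p4 hb hb2 t1]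
      show ?thesis unfolding R Lx using X by simp
    qed
  qed
qed



lemma small31:
  fixes M \<gamma> e :: real
  assumes "\<gamma> * ((M + 4) * ((M + 4) - 1) * ((M + 4) - 3)) = 1" "e * (M + 4) = 3 * (M + 4) - 8" "M + 4 \<noteq> 0"
  shows "(M + 3) * (1 + (- 2 * ((M + 4) - 2) * (3 * (M + 4) - 1) * \<gamma>)
      + (12 * ((M + 4) - 1) * \<gamma>) + (- 8 * \<gamma>)) = M - e"
  using assms by algebra

lemma small32:
  fixes M \<gamma> e :: real
  assumes "\<gamma> * ((M + 4) * ((M + 4) - 1) * ((M + 4) - 3)) = 1" "e * (M + 4) = 3 * (M + 4) - 8" "M + 4 \<noteq> 0"
  shows "((M + 3) * (M + 2) / 2) * (1 + (- 2 * ((M + 4) - 2) * (3 * (M + 4) - 1) * \<gamma>) * 2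
      + (12 * ((M + 4) - 1) * \<gamma>) * 2 ^ 2 + (- 8 * \<gamma>) * 2 ^ 3)
    = M * (M - 1) / 2 - e * M + e"
  using assms by algebra

lemma Q3_identity:
  assumes k: "k = m + 4"
  shows "(\<Sum>i<k. monom (real (k - 1 choose i) * poly (P3 k) (real i)) i) =
     [:1, 1:] ^ m * [:1, - ((3 * real k - 8) / real k), (3 * real k - 8) / real k, -1:]"
proof (rule poly_eqI)
  fix n
  define e where "e = (3 * real k - 8) / real k"
  define \<gamma> where "\<gamma> = 1 / (real k * (real k - 1) * (real k - 3))"
  define M where "M = real m"
  have pP: "poly (P3 k) x = 1 + (- 2 * (real k - 2) * (3 * real k - 1) * \<gamma>) * x + (12 * (real k - 1) * \<gamma>) * x ^ 2 + (- 8 * \<gamma>) * x ^ 3" for x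
    unfolding P3_def \<gamma>_def Let_def by (simp add: algebra_simps power2_eq_square power3_eq_cube)
  have rk: "real k = M + 4" unfolding k M_def by simp
  have hg: "\<gamma> * ((M + 4) * ((M + 4) - 1) * ((M + 4) - 3)) = 1"
    unfolding \<gamma>_def rk M_def by simp
  have he: "e * (M + 4) = 3 * (M + 4) - 8"
    unfolding e_def rk M_def by simp
  have M4: "M + 4 \<noteq> 0" unfolding M_def by simp
  have pP': "poly (P3 k) x = 1 + (- 2 * ((M + 4) - 2) * (3 * (M + 4) - 1) * \<gamma>) * x + (12 * ((M + 4) - 1) * \<gamma>) * x ^ 2 + (- 8 * \<gamma>) * x ^ 3" for x
    unfolding pP rk ..
  have L: "coeff (\<Sum>i<k. monom (real (k - 1 choose i) * poly (P3 k) (real i)) i) n =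
      real (Suc (Suc (Suc m)) choose n) * poly (P3 k) (real n)"
  proof -
    have km: "k - 1 = Suc (Suc (Suc m))" using k by simp
    have "coeff (\<Sum>i<k. monom (real (k - 1 choose i) * poly (P3 k) (real i)) i) n =
      real (k - 1 choose n) * poly (P3 k) (real n)" by (rule lhs_coeff) (simp add: k)
    then show ?thesis unfolding km .
  qed
  show "coeff (\<Sum>i<k. monom (real (k - 1 choose i) * poly (P3 k) (real i)) i) n =
     coeff ([:1, 1:] ^ m * [:1, - ((3 * real k - 8) / real k), (3 * real k - 8) / real k, -1:]) n"
    unfolding L e_def[symmetric]
  proof (cases n)
    case 0
    then show "real (Suc (Suc (Suc m)) choose n) * poly (P3 k) (real n) = coeff ([:1, 1:] ^ m * [:1, - e, e, -1:]) n"
      by (simp add: pP cpow)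
  next
    case (Suc n1)
    show "real (Suc (Suc (Suc m)) choose n) * poly (P3 k) (real n) = coeff ([:1, 1:] ^ m * [:1, - e, e, -1:]) n"
    proof (cases n1)
      case 0
      have "coeff ([:1, 1:] ^ m * [:1, - e, e, -1:]) 1 = M - e"
        by (simp add: mult_pCons_right cpow M_def)
      moreover have "real (Suc (Suc (Suc m)) choose 1) * poly (P3 k) 1 = (M + 3) * (1 + (- 2 * ((M + 4) - 2) * (3 * (M + 4) - 1) * \<gamma>)
      + (12 * ((M + 4) - 1) * \<gamma>) + (- 8 * \<gamma>))"
        unfolding pP' by (simp add: M_def)
      ultimately show ?thesis using Suc 0 small31[OF hg he M4] by simp
    next
      case (Suc n2)
      show ?thesis
      proof (cases n2)
        case 0
        have n: "n = 2" using \<open>n = Suc n1\<close> \<open>n1 = Suc n2\<close> 0 by simp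
        have c2: "real (m choose 2) = M * (M - 1) / 2"
          using bin1[of m 1] unfolding M_def by (simp add: field_simps numeral_2_eq_2)
        have c2': "real (Suc (Suc (Suc m)) choose 2) = (M + 3) * (M + 2) / 2"
          using bin1[of "Suc (Suc (Suc m))" 1] unfolding M_def by (simp add: field_simps numeral_2_eq_2 del: binomial_Suc_Suc)
        have "coeff ([:1, 1:] ^ m * [:1, - e, e, -1:]) 2 = M * (M - 1) / 2 - e * M + e"
          using c2 by (simp add: mult_pCons_right cpow M_def numeral_2_eq_2)
        moreover have "real (Suc (Suc (Suc m)) choose 2) * poly (P3 k) 2 = ((M + 3) * (M + 2) / 2) * (1 + (- 2 * ((M + 4) - 2) * (3 * (M + 4) - 1) * \<gamma>) * 2
      + (12 * ((M + 4) - 1) * \<gamma>) * 2 ^ 2 + (- 8 * \<gamma>) * 2 ^ 3)"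
          unfolding pP' c2' by simp
        ultimately show ?thesis using n small32[OF hg he M4] by simp
      next
        case (Suc t)
        have n: "n = Suc (Suc (Suc t))" using \<open>n = Suc n1\<close> \<open>n1 = Suc n2\<close> Suc by simp
        have R: "coeff ([:1, 1:] ^ m * [:1, - e, e, -1:]) n = real (m choose Suc (Suc (Suc t))) - e * real (m choose Suc (Suc t))
             + e * real (m choose Suc t) - real (m choose t)"
          unfolding n coeff_mult4 cpow by simp
        have Lx: "real (Suc (Suc (Suc m)) choose n) * poly (P3 k) (real n) =
          real (Suc (Suc (Suc m)) choose Suc (Suc (Suc t))) * (1 + (- 2 * ((M + 4) - 2) * (3 * (M + 4) - 1) * \<gamma>) * (real t + 3) + (12 * ((M + 4) - 1) * \<gamma>) * (real t + 3)^2
      + (- 8 * \<gamma>) * (real t + 3)^3)"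
          unfolding n pP' by (simp add: add.commute)
        have p1: "real (m choose Suc t) * (real t + 1) = real (m choose t) * (M - real t)" unfolding M_def by (rule bin1)
        have p2: "real (m choose Suc (Suc t)) * (real t + 2) = real (m choose Suc t) * (M - (real t + 1))"
          using bin1[of m "Suc t"] unfolding M_def by (simp add: algebra_simps)
        have p3: "real (m choose Suc (Suc (Suc t))) * (real t + 3) = real (m choose Suc (Suc t)) * (M - (real t + 2))"
          using bin1[of m "Suc (Suc t)"] unfolding M_def by (simp add: algebra_simps)
        have p4: "real (Suc m choose Suc t) * (real t + 1) = (M + 1) * real (m choose t)" unfolding M_def by (rule bin2)
        have p5: "real (Suc (Suc m) choose Suc (Suc t)) * (real t + 2) = (M + 2) * real (Suc m choose Suc t)"
          using bin2[of "Suc m" "Suc t"] unfolding M_def by (simp add: algebra_simps)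
        have p6: "real (Suc (Suc (Suc m)) choose Suc (Suc (Suc t))) * (real t + 3) = (M + 3) * real (Suc (Suc m) choose Suc (Suc t))"
          using bin2[of "Suc (Suc m)" "Suc (Suc t)"] unfolding M_def by (simp add: algebra_simps)
        have t1: "real t + 1 \<noteq> 0" "real t + 2 \<noteq> 0" "real t + 3 \<noteq> 0" by simp_all
        note X = algQ3[OF p1 p2 p3 p4 p5 p6 hg he t1]
        show ?thesis unfolding R Lx using X by simp
      qed
    qed
  qed
qed



lemma partI:
  assumes k4: "k \<ge> 4" and N2: "N \<ge> 2"
  shows "poly (holte_Q k N 2) x = ((3 * real k - 1) * (1 + x ^ 2) - 2 * (3 * real k - 5) * x) / (3 * real k - 1)"
proof -
  have N0: "N > 0" using N2 by simp
  obtain n where kn: "k = Suc (Suc (Suc n))" and n1: "n \<ge> 1"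
    using k4 by (metis Suc_le_D add_2_eq_Suc' add_leD2 numeral_2_eq_2 numeral_Bit0 le_add_diff_inverse Suc_le_mono
      numeral_3_eq_3 Suc_eq_plus1 not_less_eq_eq)
  define \<beta> where "\<beta> = 12 / ((3 * real k - 1) * (real k - 2))"
  have b0: "\<beta> \<noteq> 0" unfolding \<beta>_def using k4 by simp
  have dP: "degree (P2 k) = 2" unfolding P2_def Let_def \<beta>_def[symmetric] using b0 by simp
  have P0: "poly (P2 k) 0 = 1" unfolding P2_def Let_def by simp
  have v: "holte_v k N 2 = (\<lambda>i. if i < k then poly (P2 k) (real i) else 0)"
    by (rule holte_v_eq[OF N2 _ dP P0 eig_P2[OF N0 kn n1]]) (use k4 in simp)
  have S: "(\<Sum>i<k. monom (real (k - 1 choose i) * holte_v k N 2 i) i) =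
      (\<Sum>i<k. monom (real (k - 1 choose i) * poly (P2 k) (real i)) i)"
    unfolding v by (intro sum.cong refl) simp
  have km: "k = (k - 3) + 3" and k12: "k - 1 - 2 = k - 3" using k4 by simp_all
  have nz: "([:1, 1:] :: real poly) ^ (k - 3) \<noteq> 0" by simp
  have Q: "holte_Q k N 2 = [:1, - 2 * (3 * real k - 5) / (3 * real k - 1), 1:]"
    unfolding holte_Q_def S k12 Q2_identity[OF km] by (rule nonzero_mult_div_cancel_left[OF nz])
  have d: "3 * real k - 1 \<noteq> 0" using k4 by simp
  show ?thesis unfolding Q using d by (simp add: field_simps power2_eq_square)
qed

lemma partII:
  assumes k5: "k \<ge> 5" and N2: "N \<ge> 2"
  shows "poly (holte_Q k N 3) x = - ((x - 1) * (real k * x ^ 2 - 2 * (real k - 4) * x + real k)) / real k"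
proof -
  have N0: "N > 0" using N2 by simp
  define n where "n = k - 3"
  have kn: "k = Suc (Suc (Suc n))" and n1: "n \<ge> 1" using k5 unfolding n_def by simp_all
  define \<gamma> where "\<gamma> = 1 / (real k * (real k - 1) * (real k - 3))"
  have g0: "\<gamma> \<noteq> 0" unfolding \<gamma>_def using k5 by simp
  have dP: "degree (P3 k) = 3" unfolding P3_def Let_def \<gamma>_def[symmetric] using g0 by simp
  have P0: "poly (P3 k) 0 = 1" unfolding P3_def Let_def by simp
  have v: "holte_v k N 3 = (\<lambda>i. if i < k then poly (P3 k) (real i) else 0)"
    by (rule holte_v_eq[OF N2 _ dP P0 eig_P3[OF N0 kn n1]]) (use k5 in simp)
  have S: "(\<Sum>i<k. monom (real (k - 1 choose i) * holte_v k N 3 i) i) =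
      (\<Sum>i<k. monom (real (k - 1 choose i) * poly (P3 k) (real i)) i)"
    unfolding v by (intro sum.cong refl) simp
  have km: "k = (k - 4) + 4" and k13: "k - 1 - 3 = k - 4" using k5 by simp_all
  have nz: "([:1, 1:] :: real poly) ^ (k - 4) \<noteq> 0" by simp
  have Q: "holte_Q k N 3 = [:1, - ((3 * real k - 8) / real k), (3 * real k - 8) / real k, -1:]"
    unfolding holte_Q_def S k13 Q3_identity[OF km] by (rule nonzero_mult_div_cancel_left[OF nz])
  have d: "real k \<noteq> 0" using k5 by simp
  show ?thesis unfolding Q using d by (simp add: field_simps power2_eq_square)
qed

theorem mainTheorem7:
  fixes k N :: nat
  shows "(k \<ge> 4 \<and> N \<ge> 2 \<longrightarrow>
           (\<forall>x::real. poly (holte_Q k N 2) x =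
              ((3 * real k - 1) * (1 + x ^ 2) - 2 * (3 * real k - 5) * x) / (3 * real k - 1)))
       \<and> (k \<ge> 5 \<and> N \<ge> 2 \<longrightarrow>
           (\<forall>x::real. poly (holte_Q k N 3) x =
              - ((x - 1) * (real k * x ^ 2 - 2 * (real k - 4) * x + real k)) / real k))"
  using partI partII by blast

thm_deps mainTheorem7

end
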